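(* Let $\mathbf{D}$ be a locally small dagger kernel category and $X$ an object. The set $\mathrm{End}(X)=\mathbf{D}(X,X)$, with composition as multiplication, $\mathrm{id}_X$ as unit, $\dagger$ as involution and $[s]=\ker(s)\circ\ker(s)^\dagger$, is a Foulis semigroup; in particular for $s,t\in\mathrm{End}(X)$, $s\circ t=0$ iff $t=[s]\circ r$ for some $r\in\mathrm{End}(X)$. Moreover, sending $f:X\to Y$ to the function $\mathrm{End}(X)\to\mathrm{End}(Y)$, $s\mapsto f\circ s\circ f^\dagger$, makes $X\mapsto\mathrm{End}(X)$ a functor $\mathbf{D}\to\mathbf{Sets}$.
   Context: A dagger category is a category with a contravariant functor $\dagger$ that is the identity on objects and satisfies $f^{\dagger\dagger}=f$; a dagger mono satisfies $k^\dagger\circ k=\mathrm{id}$. A dagger kernel category is a dagger category with a zero object (giving zero morphisms $0$) in which every morphism $s$ has a kernel $\ker(s)$ that is a dagger mono. A Foulis semigroup is a monoid $(S,\cdot,1)$ with maps $(-)^\dagger:S\to S$ and $[-]:S\to S$ such that: (1) $1^\dagger=1$, $(s\cdot t)^\dagger=t^\dagger\cdot s^\dagger$, $s^{\dagger\dagger}=s$; (2) $[s]\cdot[s]=[s]=[s]^\dagger$; (3) $0:=[1]$ satisfies $0\cdot s=0=s\cdot 0$ for all $s$; (4) for all $s,x$: $s\cdot x=0$ iff $x=[s]\cdot y$ for some $y\in S$. *)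

theory Defs
  imports Main "HOL-Library.FuncSet"
begin

text \<open>A (locally small) dagger category, presented by its object set, morphism set,
domain/codomain, identities, composition (Comp g f = g o f) and the dagger.
Hom-sets are sets of elements of the type 'm, so local smallness is automatic.\<close>

record ('o, 'm) dcat =
  Obj  :: "'o set"
  Mor  :: "'m set"
  Dom  :: "'m \<Rightarrow> 'o"
  Cod  :: "'m \<Rightarrow> 'o"
  Id   :: "'o \<Rightarrow> 'm"
  Comp :: "'m \<Rightarrow> 'm \<Rightarrow> 'm"
  Dag  :: "'m \<Rightarrow> 'm"

definition Hom :: "('o, 'm) dcat \<Rightarrow> 'o \<Rightarrow> 'o \<Rightarrow> 'm set" where
  "Hom C X Y = {f \<in> Mor C. Dom C f = X \<and> Cod C f = Y}"

definition End :: "('o, 'm) dcat \<Rightarrow> 'o \<Rightarrow> 'm set" where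
  "End C X = Hom C X X"

definition category :: "('o, 'm) dcat \<Rightarrow> bool" where
  "category C \<longleftrightarrow>
     (\<forall>f \<in> Mor C. Dom C f \<in> Obj C \<and> Cod C f \<in> Obj C)
   \<and> (\<forall>X \<in> Obj C. Id C X \<in> Hom C X X)
   \<and> (\<forall>f \<in> Mor C. \<forall>g \<in> Mor C. Cod C f = Dom C g \<longrightarrow>
          Comp C g f \<in> Hom C (Dom C f) (Cod C g))
   \<and> (\<forall>f \<in> Mor C. Comp C f (Id C (Dom C f)) = f \<and> Comp C (Id C (Cod C f)) f = f)
   \<and> (\<forall>f \<in> Mor C. \<forall>g \<in> Mor C. \<forall>h \<in> Mor C.
          Cod C f = Dom C g \<and> Cod C g = Dom C h \<longrightarrow>
          Comp C h (Comp C g f) = Comp C (Comp C h g) f)"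

definition dagger_category :: "('o, 'm) dcat \<Rightarrow> bool" where
  "dagger_category C \<longleftrightarrow> category C
   \<and> (\<forall>f \<in> Mor C. Dag C f \<in> Hom C (Cod C f) (Dom C f))
   \<and> (\<forall>X \<in> Obj C. Dag C (Id C X) = Id C X)
   \<and> (\<forall>f \<in> Mor C. \<forall>g \<in> Mor C. Cod C f = Dom C g \<longrightarrow>
          Dag C (Comp C g f) = Comp C (Dag C f) (Dag C g))
   \<and> (\<forall>f \<in> Mor C. Dag C (Dag C f) = f)"

definition dagger_mono :: "('o, 'm) dcat \<Rightarrow> 'm \<Rightarrow> bool" where
  "dagger_mono C k \<longleftrightarrow> k \<in> Mor C \<and> Comp C (Dag C k) k = Id C (Dom C k)"

definition zero_obj :: "('o, 'm) dcat \<Rightarrow> 'o \<Rightarrow> bool" where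
  "zero_obj C z \<longleftrightarrow> z \<in> Obj C \<and>
     (\<forall>X \<in> Obj C. (\<exists>!f. f \<in> Hom C X z) \<and> (\<exists>!f. f \<in> Hom C z X))"

definition zero_mor :: "('o, 'm) dcat \<Rightarrow> 'o \<Rightarrow> 'o \<Rightarrow> 'm" where
  "zero_mor C X Y = (let z = (SOME z. zero_obj C z) in
      Comp C (THE f. f \<in> Hom C z Y) (THE f. f \<in> Hom C X z))"

definition is_kernel :: "('o, 'm) dcat \<Rightarrow> 'm \<Rightarrow> 'm \<Rightarrow> bool" where
  "is_kernel C s k \<longleftrightarrow> k \<in> Mor C \<and> Cod C k = Dom C s
   \<and> Comp C s k = zero_mor C (Dom C k) (Cod C s)
   \<and> (\<forall>W \<in> Obj C. \<forall>f \<in> Hom C W (Dom C s).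
         Comp C s f = zero_mor C W (Cod C s) \<longrightarrow>
         (\<exists>!g. g \<in> Hom C W (Dom C k) \<and> Comp C k g = f))"

definition dagger_kernel_category :: "('o, 'm) dcat \<Rightarrow> bool" where
  "dagger_kernel_category C \<longleftrightarrow> dagger_category C
   \<and> (\<exists>z. zero_obj C z)
   \<and> (\<forall>s \<in> Mor C. \<exists>k. is_kernel C s k \<and> dagger_mono C k)"

definition foulis_semigroup ::
  "'a set \<Rightarrow> ('a \<Rightarrow> 'a \<Rightarrow> 'a) \<Rightarrow> 'a \<Rightarrow> ('a \<Rightarrow> 'a) \<Rightarrow> ('a \<Rightarrow> 'a) \<Rightarrow> bool" where
  "foulis_semigroup S mult one dag br \<longleftrightarrow>
     (\<forall>s \<in> S. \<forall>t \<in> S. mult s t \<in> S) \<and> one \<in> S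
   \<and> (\<forall>s \<in> S. dag s \<in> S) \<and> (\<forall>s \<in> S. br s \<in> S)
   \<and> (\<forall>s \<in> S. \<forall>t \<in> S. \<forall>u \<in> S. mult (mult s t) u = mult s (mult t u))
   \<and> (\<forall>s \<in> S. mult one s = s \<and> mult s one = s)
   \<and> dag one = one
   \<and> (\<forall>s \<in> S. \<forall>t \<in> S. dag (mult s t) = mult (dag t) (dag s))
   \<and> (\<forall>s \<in> S. dag (dag s) = s)
   \<and> (\<forall>s \<in> S. mult (br s) (br s) = br s \<and> br s = dag (br s))
   \<and> (\<forall>s \<in> S. mult (br one) s = br one \<and> mult s (br one) = br one)
   \<and> (\<forall>s \<in> S. \<forall>x \<in> S. mult s x = br one \<longleftrightarrow> (\<exists>y \<in> S. x = mult (br s) y))"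

definition End_map :: "('o, 'm) dcat \<Rightarrow> 'm \<Rightarrow> 'm \<Rightarrow> 'm" where
  "End_map C f = (\<lambda>s \<in> End C (Dom C f). Comp C f (Comp C s (Dag C f)))"

end

theory Submission
  imports Defs
begin

lemma hom_mor: "f \<in> Hom C A B \<Longrightarrow> f \<in> Mor C \<and> Dom C f = A \<and> Cod C f = B"
  by (simp add: Hom_def)

lemma mor_hom: "f \<in> Mor C \<Longrightarrow> f \<in> Hom C (Dom C f) (Cod C f)"
  by (simp add: Hom_def)

lemma comp_hom: "category C \<Longrightarrow> f \<in> Hom C A B \<Longrightarrow> g \<in> Hom C B D \<Longrightarrow> Comp C g f \<in> Hom C A D"
  unfolding category_def Hom_def by auto

lemma id_hom: "category C \<Longrightarrow> A \<in> Obj C \<Longrightarrow> Id C A \<in> Hom C A A"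
  unfolding category_def by auto

lemma id_l: "category C \<Longrightarrow> f \<in> Hom C A B \<Longrightarrow> Comp C (Id C B) f = f"
  unfolding category_def Hom_def by auto

lemma id_r: "category C \<Longrightarrow> f \<in> Hom C A B \<Longrightarrow> Comp C f (Id C A) = f"
  unfolding category_def Hom_def by auto

lemma assoc: "category C \<Longrightarrow> f \<in> Hom C A B \<Longrightarrow> g \<in> Hom C B D \<Longrightarrow> h \<in> Hom C D E
   \<Longrightarrow> Comp C h (Comp C g f) = Comp C (Comp C h g) f"
  unfolding category_def Hom_def by auto

lemma dom_obj: "category C \<Longrightarrow> f \<in> Hom C A B \<Longrightarrow> A \<in> Obj C \<and> B \<in> Obj C"
  unfolding category_def Hom_def by auto

lemma dag_hom: "dagger_category C \<Longrightarrow> f \<in> Hom C A B \<Longrightarrow> Dag C f \<in> Hom C B A"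
  unfolding dagger_category_def Hom_def by auto

lemma dag_comp: "dagger_category C \<Longrightarrow> f \<in> Hom C A B \<Longrightarrow> g \<in> Hom C B D \<Longrightarrow>
   Dag C (Comp C g f) = Comp C (Dag C f) (Dag C g)"
  unfolding dagger_category_def Hom_def by auto

lemma dag_dag: "dagger_category C \<Longrightarrow> f \<in> Hom C A B \<Longrightarrow> Dag C (Dag C f) = f"
  unfolding dagger_category_def Hom_def by auto

lemma dag_id: "dagger_category C \<Longrightarrow> A \<in> Obj C \<Longrightarrow> Dag C (Id C A) = Id C A"
  unfolding dagger_category_def by auto

lemma dc_cat: "dagger_category C \<Longrightarrow> category C"
  unfolding dagger_category_def by auto

lemma zero_in:
  assumes "zero_obj C z" "Y \<in> Obj C"
  shows "(THE f. f \<in> Hom C z Y) \<in> Hom C z Y" "(THE f. f \<in> Hom C Y z) \<in> Hom C Y z"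
    "\<And>f. f \<in> Hom C z Y \<Longrightarrow> f = (THE f. f \<in> Hom C z Y)"
    "\<And>f. f \<in> Hom C Y z \<Longrightarrow> f = (THE f. f \<in> Hom C Y z)"
proof -
  have u1: "\<exists>!f. f \<in> Hom C z Y" and u2: "\<exists>!f. f \<in> Hom C Y z"
    using assms unfolding zero_obj_def by blast+
  show "(THE f. f \<in> Hom C z Y) \<in> Hom C z Y" using theI'[OF u1] .
  show "(THE f. f \<in> Hom C Y z) \<in> Hom C Y z" using theI'[OF u2] .
  show "\<And>f. f \<in> Hom C z Y \<Longrightarrow> f = (THE f. f \<in> Hom C z Y)"
    using u1 the1_equality by metis
  show "\<And>f. f \<in> Hom C Y z \<Longrightarrow> f = (THE f. f \<in> Hom C Y z)"
    using u2 the1_equality by metis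
qed

locale dk =
  fixes C :: "('o, 'm) dcat"
  assumes dc: "dagger_category C" and ex: "\<exists>z. zero_obj C z"
begin

definition "z0 = (SOME z. zero_obj C z)"

lemma z0: "zero_obj C z0"
  using ex unfolding z0_def by (rule someI_ex)

lemma cat: "category C" using dc dc_cat by blast

lemma z0obj: "z0 \<in> Obj C" using z0 unfolding zero_obj_def by (rule conjunct1)

lemma zm_def: "zero_mor C X Y = Comp C (THE f. f \<in> Hom C z0 Y) (THE f. f \<in> Hom C X z0)"
  unfolding zero_mor_def z0_def Let_def by simp

lemma zm_hom: "X \<in> Obj C \<Longrightarrow> Y \<in> Obj C \<Longrightarrow> zero_mor C X Y \<in> Hom C X Y"
  unfolding zm_def by (rule comp_hom[OF cat zero_in(2)[OF z0] zero_in(1)[OF z0]])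

lemma zm_left: "X \<in> Obj C \<Longrightarrow> f \<in> Hom C Y Z \<Longrightarrow> Comp C f (zero_mor C X Y) = zero_mor C X Z"
proof -
  assume X: "X \<in> Obj C" and f: "f \<in> Hom C Y Z"
  have Y: "Y \<in> Obj C" and Z: "Z \<in> Obj C" using dom_obj[OF cat f] by auto
  let ?a = "THE f. f \<in> Hom C z0 Y" and ?b = "THE f. f \<in> Hom C X z0"
  have a: "?a \<in> Hom C z0 Y" by (rule zero_in(1)[OF z0 Y])
  have b: "?b \<in> Hom C X z0" by (rule zero_in(2)[OF z0 X])
  have "Comp C f ?a \<in> Hom C z0 Z" using comp_hom[OF cat a f] .
  hence e: "Comp C f ?a = (THE f. f \<in> Hom C z0 Z)" by (rule zero_in(3)[OF z0 Z])
  show ?thesis unfolding zm_def using assoc[OF cat b a f] e by simp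
qed

lemma zm_right: "Z \<in> Obj C \<Longrightarrow> f \<in> Hom C X Y \<Longrightarrow> Comp C (zero_mor C Y Z) f = zero_mor C X Z"
proof -
  assume Z: "Z \<in> Obj C" and f: "f \<in> Hom C X Y"
  have Y: "Y \<in> Obj C" and X: "X \<in> Obj C" using dom_obj[OF cat f] by auto
  let ?a = "THE f. f \<in> Hom C z0 Z" and ?b = "THE f. f \<in> Hom C Y z0"
  have a: "?a \<in> Hom C z0 Z" by (rule zero_in(1)[OF z0 Z])
  have b: "?b \<in> Hom C Y z0" by (rule zero_in(2)[OF z0 Y])
  have "Comp C ?b f \<in> Hom C X z0" using comp_hom[OF cat f b] .
  hence e: "Comp C ?b f = (THE f. f \<in> Hom C X z0)" by (rule zero_in(4)[OF z0 X])
  show ?thesis unfolding zm_def using assoc[OF cat f b a] e by simp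
qed

lemma zm_dag: "X \<in> Obj C \<Longrightarrow> Y \<in> Obj C \<Longrightarrow> Dag C (zero_mor C X Y) = zero_mor C Y X"
proof -
  assume X: "X \<in> Obj C" and Y: "Y \<in> Obj C"
  let ?a = "THE f. f \<in> Hom C z0 Y" and ?b = "THE f. f \<in> Hom C X z0"
  have a: "?a \<in> Hom C z0 Y" by (rule zero_in(1)[OF z0 Y])
  have b: "?b \<in> Hom C X z0" by (rule zero_in(2)[OF z0 X])
  have da: "Dag C ?a = (THE f. f \<in> Hom C Y z0)" by (rule zero_in(4)[OF z0 Y dag_hom[OF dc a]])
  have db: "Dag C ?b = (THE f. f \<in> Hom C z0 X)" by (rule zero_in(3)[OF z0 X dag_hom[OF dc b]])
  show ?thesis unfolding zm_def using dag_comp[OF dc b a] da db by simp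
qed

end


locale dkk = dk C for C :: "('o, 'm) dcat" +
  fixes ker :: "'m \<Rightarrow> 'm"
  assumes kr: "\<forall>s \<in> Mor C. is_kernel C s (ker s) \<and> dagger_mono C (ker s)"
begin

lemma kfacts:
  assumes s: "s \<in> Hom C X Y"
  shows "ker s \<in> Hom C (Dom C (ker s)) X"
    "Comp C s (ker s) = zero_mor C (Dom C (ker s)) Y"
    "Comp C (Dag C (ker s)) (ker s) = Id C (Dom C (ker s))"
    "\<And>W f. W \<in> Obj C \<Longrightarrow> f \<in> Hom C W X \<Longrightarrow> Comp C s f = zero_mor C W Y \<Longrightarrow>
        \<exists>g. g \<in> Hom C W (Dom C (ker s)) \<and> Comp C (ker s) g = f"
proof -
  have sm: "s \<in> Mor C" "Dom C s = X" "Cod C s = Y" using s by (auto simp: Hom_def)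
  have K: "is_kernel C s (ker s)" "dagger_mono C (ker s)" using kr sm(1) by auto
  show "ker s \<in> Hom C (Dom C (ker s)) X" using K(1) sm unfolding is_kernel_def Hom_def by simp
  show "Comp C s (ker s) = zero_mor C (Dom C (ker s)) Y" using K(1) sm unfolding is_kernel_def by simp
  show "Comp C (Dag C (ker s)) (ker s) = Id C (Dom C (ker s))" using K(2) unfolding dagger_mono_def by simp
  fix W f assume W: "W \<in> Obj C" and f: "f \<in> Hom C W X" and z: "Comp C s f = zero_mor C W Y"
  have "\<forall>W \<in> Obj C. \<forall>f \<in> Hom C W (Dom C s).
         Comp C s f = zero_mor C W (Cod C s) \<longrightarrow>
         (\<exists>!g. g \<in> Hom C W (Dom C (ker s)) \<and> Comp C (ker s) g = f)"
    using K(1) unfolding is_kernel_def by blast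
  hence "\<exists>!g. g \<in> Hom C W (Dom C (ker s)) \<and> Comp C (ker s) g = f" using W f z sm by simp
  thus "\<exists>g. g \<in> Hom C W (Dom C (ker s)) \<and> Comp C (ker s) g = f" by blast
qed

lemma br_hom: "s \<in> Hom C X Y \<Longrightarrow> Comp C (ker s) (Dag C (ker s)) \<in> Hom C X X"
  using kfacts(1) comp_hom[OF cat] dag_hom[OF dc] by blast

lemma br_idem: assumes s: "s \<in> Hom C X Y"
  shows "Comp C (Comp C (ker s) (Dag C (ker s))) (Comp C (ker s) (Dag C (ker s))) = Comp C (ker s) (Dag C (ker s))"
proof -
  let ?k = "ker s" let ?K = "Dom C (ker s)"
  have k: "?k \<in> Hom C ?K X" using kfacts(1)[OF s] .
  have kd: "Dag C ?k \<in> Hom C X ?K" using dag_hom[OF dc k] .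
  have "Comp C (Comp C ?k (Dag C ?k)) (Comp C ?k (Dag C ?k)) = Comp C ?k (Comp C (Dag C ?k) (Comp C ?k (Dag C ?k)))"
    using assoc[OF cat comp_hom[OF cat kd k] kd k] by simp
  also have "\<dots> = Comp C ?k (Comp C (Comp C (Dag C ?k) ?k) (Dag C ?k))"
    using assoc[OF cat kd k kd] by simp
  also have "\<dots> = Comp C ?k (Dag C ?k)" using kfacts(3)[OF s] id_l[OF cat kd] by simp
  finally show ?thesis .
qed

lemma br_dag: assumes s: "s \<in> Hom C X Y"
  shows "Dag C (Comp C (ker s) (Dag C (ker s))) = Comp C (ker s) (Dag C (ker s))"
proof -
  have k: "ker s \<in> Hom C (Dom C (ker s)) X" using kfacts(1)[OF s] .
  show ?thesis using dag_comp[OF dc dag_hom[OF dc k] k] dag_dag[OF dc k] by simp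
qed

lemma br_id: assumes X: "X \<in> Obj C"
  shows "Comp C (ker (Id C X)) (Dag C (ker (Id C X))) = zero_mor C X X"
proof -
  have i: "Id C X \<in> Hom C X X" using id_hom[OF cat X] .
  let ?k = "ker (Id C X)" let ?K = "Dom C ?k"
  have k: "?k \<in> Hom C ?K X" using kfacts(1)[OF i] .
  have "?k = zero_mor C ?K X" using kfacts(2)[OF i] id_l[OF cat k] by simp
  moreover have "Comp C (zero_mor C ?K X) (Dag C ?k) = zero_mor C X X"
    using zm_right[OF X dag_hom[OF dc k]] .
  ultimately show ?thesis by simp
qed

lemma kerchar: assumes s: "s \<in> Hom C X X" and x: "x \<in> Hom C X X"
  shows "Comp C s x = zero_mor C X X \<longleftrightarrow> (\<exists>y \<in> Hom C X X. x = Comp C (Comp C (ker s) (Dag C (ker s))) y)"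
proof -
  let ?k = "ker s" let ?K = "Dom C (ker s)"
  have k: "?k \<in> Hom C ?K X" using kfacts(1)[OF s] .
  have kd: "Dag C ?k \<in> Hom C X ?K" using dag_hom[OF dc k] .
  have X: "X \<in> Obj C" using dom_obj[OF cat s] by auto
  show ?thesis
  proof
    assume "Comp C s x = zero_mor C X X"
    then obtain g where g: "g \<in> Hom C X ?K" "Comp C ?k g = x" using kfacts(4)[OF s X x] by blast
    have "Comp C (Comp C ?k (Dag C ?k)) x = Comp C ?k (Comp C (Comp C (Dag C ?k) ?k) g)"
      using g(2) assoc[OF cat comp_hom[OF cat g(1) k] kd k] assoc[OF cat g(1) k kd] by simp
    also have "\<dots> = x" using kfacts(3)[OF s] id_l[OF cat g(1)] g(2) by simp
    finally show "\<exists>y \<in> Hom C X X. x = Comp C (Comp C (ker s) (Dag C (ker s))) y" using x by (intro bexI[of _ x]) simp_all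
  next
    assume "\<exists>y \<in> Hom C X X. x = Comp C (Comp C (ker s) (Dag C (ker s))) y"
    then obtain y where y: "y \<in> Hom C X X" "x = Comp C (Comp C ?k (Dag C ?k)) y" by blast
    have ky: "Comp C (Dag C ?k) y \<in> Hom C X ?K" using comp_hom[OF cat y(1) kd] .
    have "Comp C s x = Comp C s (Comp C ?k (Comp C (Dag C ?k) y))"
      using y assoc[OF cat y(1) kd k] by simp
    also have "\<dots> = Comp C (Comp C s ?k) (Comp C (Dag C ?k) y)" using assoc[OF cat ky k s] .
    also have "\<dots> = zero_mor C X X" using kfacts(2)[OF s] zm_right[OF X ky] by simp
    finally show "Comp C s x = zero_mor C X X" .
  qed
qed

end

theorem mainTheorem14:
  fixes C :: "('o, 'm) dcat" and ker :: "'m \<Rightarrow> 'm" and X :: 'o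
  assumes "dagger_kernel_category C"
    and "\<forall>s \<in> Mor C. is_kernel C s (ker s) \<and> dagger_mono C (ker s)"
    and "X \<in> Obj C"
  shows "foulis_semigroup (End C X) (Comp C) (Id C X) (Dag C)
           (\<lambda>s. Comp C (ker s) (Dag C (ker s)))
     \<and> (\<forall>s \<in> End C X. \<forall>t \<in> End C X.
          Comp C s t = zero_mor C X X \<longleftrightarrow>
          (\<exists>r \<in> End C X. t = Comp C (Comp C (ker s) (Dag C (ker s))) r))
     \<and> (\<forall>f \<in> Mor C. End_map C f \<in> End C (Dom C f) \<rightarrow>\<^sub>E End C (Cod C f))
     \<and> (\<forall>Y \<in> Obj C. End_map C (Id C Y) = (\<lambda>s \<in> End C Y. s))
     \<and> (\<forall>f \<in> Mor C. \<forall>g \<in> Mor C. Cod C f = Dom C g \<longrightarrow>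
          End_map C (Comp C g f) = compose (End C (Dom C f)) (End_map C g) (End_map C f))"
proof -
  interpret dkk C ker
    using assms unfolding dagger_kernel_category_def by unfold_locales auto
  have X: "X \<in> Obj C" by fact
  have E: "End C X = Hom C X X" by (simp add: End_def)
  have fs: "foulis_semigroup (End C X) (Comp C) (Id C X) (Dag C)
           (\<lambda>s. Comp C (ker s) (Dag C (ker s)))"
    unfolding foulis_semigroup_def E
  proof (intro conjI ballI)
    show "Id C X \<in> Hom C X X" using id_hom[OF cat X] .
    show "Dag C (Id C X) = Id C X" using dag_id[OF dc X] .
    fix s assume s: "s \<in> Hom C X X"
    show "Dag C s \<in> Hom C X X" using dag_hom[OF dc s] .
    show "Comp C (ker s) (Dag C (ker s)) \<in> Hom C X X" using br_hom[OF s] .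
    show "Comp C (Id C X) s = s" using id_l[OF cat s] .
    show "Comp C s (Id C X) = s" using id_r[OF cat s] .
    show "Dag C (Dag C s) = s" using dag_dag[OF dc s] .
    show "Comp C (Comp C (ker s) (Dag C (ker s))) (Comp C (ker s) (Dag C (ker s))) = Comp C (ker s) (Dag C (ker s))"
      using br_idem[OF s] .
    show "Comp C (ker s) (Dag C (ker s)) = Dag C (Comp C (ker s) (Dag C (ker s)))"
      using br_dag[OF s] by simp
    show "Comp C (Comp C (ker (Id C X)) (Dag C (ker (Id C X)))) s = Comp C (ker (Id C X)) (Dag C (ker (Id C X)))"
      using br_id[OF X] zm_right[OF X s] by simp
    show "Comp C s (Comp C (ker (Id C X)) (Dag C (ker (Id C X)))) = Comp C (ker (Id C X)) (Dag C (ker (Id C X)))"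
      using br_id[OF X] zm_left[OF X s] by simp
    fix t assume t: "t \<in> Hom C X X"
    show "Comp C s t \<in> Hom C X X" using comp_hom[OF cat t s] .
    show "Dag C (Comp C s t) = Comp C (Dag C t) (Dag C s)" using dag_comp[OF dc t s] .
    show "Comp C s t = Comp C (ker (Id C X)) (Dag C (ker (Id C X))) \<longleftrightarrow>
      (\<exists>y\<in>Hom C X X. t = Comp C (Comp C (ker s) (Dag C (ker s))) y)"
      using br_id[OF X] kerchar[OF s t] by simp
    fix u assume u: "u \<in> Hom C X X"
    show "Comp C (Comp C s t) u = Comp C s (Comp C t u)" using assoc[OF cat u t s] by simp
  qed
  have f1: "\<forall>f \<in> Mor C. End_map C f \<in> End C (Dom C f) \<rightarrow>\<^sub>E End C (Cod C f)"
  proof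
    fix f assume f: "f \<in> Mor C"
    hence fh: "f \<in> Hom C (Dom C f) (Cod C f)" by (rule mor_hom)
    show "End_map C f \<in> End C (Dom C f) \<rightarrow>\<^sub>E End C (Cod C f)"
      unfolding End_map_def restrict_PiE_iff
    proof
      fix s assume "s \<in> End C (Dom C f)"
      hence s: "s \<in> Hom C (Dom C f) (Dom C f)" by (simp add: End_def)
      show "Comp C f (Comp C s (Dag C f)) \<in> End C (Cod C f)"
        unfolding End_def using comp_hom[OF cat comp_hom[OF cat dag_hom[OF dc fh] s] fh] .
    qed
  qed
  have f2: "\<forall>Y \<in> Obj C. End_map C (Id C Y) = (\<lambda>s \<in> End C Y. s)"
  proof
    fix Y assume Y: "Y \<in> Obj C"
    have i: "Id C Y \<in> Hom C Y Y" using id_hom[OF cat Y] .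
    hence d: "Dom C (Id C Y) = Y" by (simp add: Hom_def)
    show "End_map C (Id C Y) = (\<lambda>s \<in> End C Y. s)"
      unfolding End_map_def d
    proof (intro restrict_ext)
      fix s assume "s \<in> End C Y"
      hence s: "s \<in> Hom C Y Y" by (simp add: End_def)
      show "Comp C (Id C Y) (Comp C s (Dag C (Id C Y))) = s"
        using dag_id[OF dc Y] id_r[OF cat s] id_l[OF cat s] by simp
    qed
  qed
  have f3: "\<forall>f \<in> Mor C. \<forall>g \<in> Mor C. Cod C f = Dom C g \<longrightarrow>
          End_map C (Comp C g f) = compose (End C (Dom C f)) (End_map C g) (End_map C f)"
  proof (intro ballI impI)
    fix f g assume f: "f \<in> Mor C" and g: "g \<in> Mor C" and c: "Cod C f = Dom C g"
    let ?A = "Dom C f" let ?B = "Dom C g" let ?D = "Cod C g"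
    have fh: "f \<in> Hom C ?A ?B" using mor_hom[OF f] c by simp
    have gh: "g \<in> Hom C ?B ?D" using mor_hom[OF g] .
    have gf: "Comp C g f \<in> Hom C ?A ?D" using comp_hom[OF cat fh gh] .
    hence dgf: "Dom C (Comp C g f) = ?A" by (simp add: Hom_def)
    have fd: "Dag C f \<in> Hom C ?B ?A" using dag_hom[OF dc fh] .
    have gd: "Dag C g \<in> Hom C ?D ?B" using dag_hom[OF dc gh] .
    show "End_map C (Comp C g f) = compose (End C (Dom C f)) (End_map C g) (End_map C f)"
      unfolding compose_def End_map_def dgf
    proof (intro restrict_ext)
      fix s assume "s \<in> End C ?A"
      hence s: "s \<in> Hom C ?A ?A" by (simp add: End_def)
      have sf: "Comp C s (Dag C f) \<in> Hom C ?B ?A" using comp_hom[OF cat fd s] .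
      have fsf: "Comp C f (Comp C s (Dag C f)) \<in> Hom C ?B ?B" using comp_hom[OF cat sf fh] .
      have fsfg: "Comp C (Comp C f (Comp C s (Dag C f))) (Dag C g) \<in> Hom C ?D ?B"
        using comp_hom[OF cat gd fsf] .
      have "Comp C (Comp C g f) (Comp C s (Dag C (Comp C g f)))
          = Comp C (Comp C g f) (Comp C s (Comp C (Dag C f) (Dag C g)))"
        using dag_comp[OF dc fh gh] by simp
      also have "\<dots> = Comp C g (Comp C f (Comp C (Comp C s (Dag C f)) (Dag C g)))"
        using assoc[OF cat gd fd s] assoc[OF cat comp_hom[OF cat gd sf] fh gh] by simp
      also have "\<dots> = Comp C g (Comp C (Comp C f (Comp C s (Dag C f))) (Dag C g))"
        using assoc[OF cat gd sf fh] by simp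
      finally have eq: "Comp C (Comp C g f) (Comp C s (Dag C (Comp C g f)))
          = Comp C g (Comp C (Comp C f (Comp C s (Dag C f))) (Dag C g))" .
      have "Comp C f (Comp C s (Dag C f)) \<in> End C ?B" using fsf by (simp add: End_def c)
      then show "Comp C (Comp C g f) (Comp C s (Dag C (Comp C g f))) =
         (\<lambda>s\<in>End C (Dom C g). Comp C g (Comp C s (Dag C g)))
            ((\<lambda>s\<in>End C (Dom C f). Comp C f (Comp C s (Dag C f))) s)"
        using \<open>s \<in> End C ?A\<close> eq by simp
    qed
  qed
  have k: "\<forall>s \<in> End C X. \<forall>t \<in> End C X.
          Comp C s t = zero_mor C X X \<longleftrightarrow>
          (\<exists>r \<in> End C X. t = Comp C (Comp C (ker s) (Dag C (ker s))) r)"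
    unfolding E using kerchar by blast
  show ?thesis using fs f1 f2 f3 k by (intro conjI)
qed

end
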